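(* Assume the standing setting below. If $I$ is a dually safe feasible set, then $\mathring{\mathsf{span}}_M(I)\cap E_1$ is a base of $N^*\upharpoonright(\mathsf{span}_M(I)\cap E_1)$.
   Context: Standing setting: $E$ is countable, $M$ is a finitary matroid on $E$, $N$ is a matroid on $E$ that is a direct sum of a finitary and a cofinitary matroid. $E_0$ is the union of the finitary components of $N$ (components = connected components of the circuit hypergraph), $E_1:=E\setminus E_0$, $F^j:=F\cap E_j$. $\mathring{\mathsf{span}}_M(F):=\mathsf{span}_M(F)\setminus F$. $F$ is dually safe if $F^1\subseteq\mathsf{span}_{N^*}(\mathring{\mathsf{span}}_M(F))$. Matroids are possibly infinite; $M/X:=(M^*\upharpoonright(E\setminus X))^*$, $M.X:=M/(E\setminus X)$; $r(K)=0$ means $\varnothing$ is a base of $K$. $W$ is an $(M,N)$-wave if $M\upharpoonright W$ has a base independent in $N.W$. $\mathsf{cond}(M,N)$: for every $(M,N)$-wave $W$, $N.W$ has an $M$-independent base. A set $I$ independent in both $M$ and $N$ is feasible if $\mathsf{cond}(M/I,N/I)$ holds. *)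

theory Defs
  imports Main "HOL-Library.Countable_Set"
begin

text \<open>Possibly infinite matroids (Bruhn et al. independence axioms), given by a
ground set and a family of independent sets.\<close>

record 'a matroid =
  gnd :: "'a set"
  ind :: "'a set set"

definition base :: "'a matroid \<Rightarrow> 'a set \<Rightarrow> bool" where
  "base M B \<longleftrightarrow> B \<in> ind M \<and> (\<forall>I\<in>ind M. B \<subseteq> I \<longrightarrow> I = B)"

definition is_matroid :: "'a matroid \<Rightarrow> bool" where
  "is_matroid M \<longleftrightarrow>
     (\<forall>I\<in>ind M. I \<subseteq> gnd M) \<and>
     {} \<in> ind M \<and>
     (\<forall>I J. I \<in> ind M \<and> J \<subseteq> I \<longrightarrow> J \<in> ind M) \<and>
     (\<forall>I B. I \<in> ind M \<and> \<not> base M I \<and> base M B \<longrightarrow>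
        (\<exists>x\<in>B - I. insert x I \<in> ind M)) \<and>
     (\<forall>I X. I \<in> ind M \<and> I \<subseteq> X \<and> X \<subseteq> gnd M \<longrightarrow>
        (\<exists>J. J \<in> ind M \<and> I \<subseteq> J \<and> J \<subseteq> X \<and>
             (\<forall>K\<in>ind M. J \<subseteq> K \<and> K \<subseteq> X \<longrightarrow> K = J)))"

definition dual :: "'a matroid \<Rightarrow> 'a matroid" where
  "dual M = \<lparr>gnd = gnd M,
             ind = {I. I \<subseteq> gnd M \<and> (\<exists>B. base M B \<and> I \<subseteq> gnd M - B)}\<rparr>"

definition restrict :: "'a matroid \<Rightarrow> 'a set \<Rightarrow> 'a matroid" where
  "restrict M X = \<lparr>gnd = X, ind = {I \<in> ind M. I \<subseteq> X}\<rparr>"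

definition contract :: "'a matroid \<Rightarrow> 'a set \<Rightarrow> 'a matroid" where
  "contract M X = dual (restrict (dual M) (gnd M - X))"

definition contract_to :: "'a matroid \<Rightarrow> 'a set \<Rightarrow> 'a matroid" where
  "contract_to M X = contract M (gnd M - X)"

definition circuit :: "'a matroid \<Rightarrow> 'a set \<Rightarrow> bool" where
  "circuit M C \<longleftrightarrow> C \<subseteq> gnd M \<and> C \<notin> ind M \<and> (\<forall>D. D \<subset> C \<longrightarrow> D \<in> ind M)"

definition finitary :: "'a matroid \<Rightarrow> bool" where
  "finitary M \<longleftrightarrow> (\<forall>I. I \<subseteq> gnd M \<and> (\<forall>F. F \<subseteq> I \<and> finite F \<longrightarrow> F \<in> ind M) \<longrightarrow> I \<in> ind M)"

definition cofinitary :: "'a matroid \<Rightarrow> bool" where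
  "cofinitary M \<longleftrightarrow> finitary (dual M)"

definition fin_cofin_sum :: "'a matroid \<Rightarrow> bool" where
  "fin_cofin_sum N \<longleftrightarrow> (\<exists>A B. A \<inter> B = {} \<and> A \<union> B = gnd N \<and>
      finitary (restrict N A) \<and> cofinitary (restrict N B) \<and>
      ind N = {I1 \<union> I2 | I1 I2. I1 \<in> ind (restrict N A) \<and> I2 \<in> ind (restrict N B)})"

definition span :: "'a matroid \<Rightarrow> 'a set \<Rightarrow> 'a set" where
  "span M X = X \<union> {e \<in> gnd M. \<exists>C. circuit M C \<and> e \<in> C \<and> C \<subseteq> insert e X}"

definition span_ring :: "'a matroid \<Rightarrow> 'a set \<Rightarrow> 'a set" where
  "span_ring M X = span M X - X"

definition circ_rel :: "'a matroid \<Rightarrow> ('a \<times> 'a) set" where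
  "circ_rel M = {(x, y). \<exists>C. circuit M C \<and> x \<in> C \<and> y \<in> C}"

definition component :: "'a matroid \<Rightarrow> 'a set \<Rightarrow> bool" where
  "component M K \<longleftrightarrow> (\<exists>x\<in>gnd M. K = {y \<in> gnd M. (x, y) \<in> (circ_rel M)\<^sup>*})"

definition fin_part :: "'a matroid \<Rightarrow> 'a set" where
  "fin_part N = \<Union>{K. component N K \<and> finitary (restrict N K)}"

definition cofin_part :: "'a matroid \<Rightarrow> 'a set" where
  "cofin_part N = gnd N - fin_part N"

definition dually_safe :: "'a matroid \<Rightarrow> 'a matroid \<Rightarrow> 'a set \<Rightarrow> bool" where
  "dually_safe M N F \<longleftrightarrow> F \<inter> cofin_part N \<subseteq> span (dual N) (span_ring M F)"

definition wave :: "'a matroid \<Rightarrow> 'a matroid \<Rightarrow> 'a set \<Rightarrow> bool" where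
  "wave M N W \<longleftrightarrow> W \<subseteq> gnd M \<and> (\<exists>B. base (restrict M W) B \<and> B \<in> ind (contract_to N W))"

definition cond :: "'a matroid \<Rightarrow> 'a matroid \<Rightarrow> bool" where
  "cond M N \<longleftrightarrow> (\<forall>W. wave M N W \<longrightarrow> (\<exists>B. base (contract_to N W) B \<and> B \<in> ind M))"

definition feasible :: "'a matroid \<Rightarrow> 'a matroid \<Rightarrow> 'a set \<Rightarrow> bool" where
  "feasible M N I \<longleftrightarrow> I \<in> ind M \<and> I \<in> ind N \<and> cond (contract M I) (contract N I)"

end

theory Submission imports Defs begin

lemma ind_dual: "ind (dual M) = {I. I \<subseteq> gnd M \<and> (\<exists>B. base M B \<and> I \<subseteq> gnd M - B)}"
  by (simp add: dual_def)
lemma gnd_dual[simp]: "gnd (dual M) = gnd M" by (simp add: dual_def)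
lemma gnd_restrict[simp]: "gnd (restrict M X) = X" by (simp add: restrict_def)
lemma ind_restrict: "ind (restrict M X) = {I \<in> ind M. I \<subseteq> X}" by (simp add: restrict_def)
lemma gnd_contract[simp]: "gnd (contract M X) = gnd M - X" by (simp add: contract_def)
lemma base_restrict: "base (restrict M X) B \<longleftrightarrow> B \<in> ind M \<and> B \<subseteq> X \<and> (\<forall>L\<in>ind M. L \<subseteq> X \<and> B \<subseteq> L \<longrightarrow> L = B)"
  by (auto simp: base_def ind_restrict)

lemma mat_sub: "is_matroid M \<Longrightarrow> I \<in> ind M \<Longrightarrow> I \<subseteq> gnd M"
  unfolding is_matroid_def by (drule conjunct1) blast
lemma mat_empty: "is_matroid M \<Longrightarrow> {} \<in> ind M"
  unfolding is_matroid_def by (drule conjunct2, drule conjunct1) assumption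
lemma mat_down: "is_matroid M \<Longrightarrow> I \<in> ind M \<Longrightarrow> J \<subseteq> I \<Longrightarrow> J \<in> ind M"
  unfolding is_matroid_def by (drule conjunct2, drule conjunct2, drule conjunct1) blast
lemma mat_aug: "is_matroid M \<Longrightarrow> I \<in> ind M \<Longrightarrow> \<not> base M I \<Longrightarrow> base M B \<Longrightarrow> \<exists>x\<in>B - I. insert x I \<in> ind M"
  unfolding is_matroid_def by (drule conjunct2, drule conjunct2, drule conjunct2, drule conjunct1) blast
lemma mat_max: "is_matroid M \<Longrightarrow> I \<in> ind M \<Longrightarrow> I \<subseteq> X \<Longrightarrow> X \<subseteq> gnd M \<Longrightarrow>
   \<exists>J. J \<in> ind M \<and> I \<subseteq> J \<and> J \<subseteq> X \<and> (\<forall>K\<in>ind M. J \<subseteq> K \<and> K \<subseteq> X \<longrightarrow> K = J)"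
  unfolding is_matroid_def by (drule conjunct2, drule conjunct2, drule conjunct2, drule conjunct2) blast

lemma base_ind: "base M B \<Longrightarrow> B \<in> ind M" by (simp add: base_def)

lemma base_ext:
  assumes M: "is_matroid M" and "I \<in> ind M" "I \<subseteq> X" "X \<subseteq> gnd M" "base M B0" "B0 \<subseteq> X"
  shows "\<exists>B. base M B \<and> I \<subseteq> B \<and> B \<subseteq> X"
proof -
  obtain J where J: "J \<in> ind M" "I \<subseteq> J" "J \<subseteq> X" and mx: "\<forall>K\<in>ind M. J \<subseteq> K \<and> K \<subseteq> X \<longrightarrow> K = J"
    using mat_max[OF M assms(2,3,4)] by blast
  have "base M J"
  proof (rule ccontr)
    assume "\<not> base M J"
    then obtain x where "x \<in> B0 - J" "insert x J \<in> ind M" using mat_aug[OF M J(1) _ assms(5)] by blast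
    then show False using mx assms(6) J(3) by blast
  qed
  then show ?thesis using J by blast
qed

lemma base_exists_ext:
  assumes M: "is_matroid M" and "I \<in> ind M"
  shows "\<exists>B. base M B \<and> I \<subseteq> B"
proof -
  obtain J where J: "J \<in> ind M" "I \<subseteq> J" "J \<subseteq> gnd M" and mx: "\<forall>K\<in>ind M. J \<subseteq> K \<and> K \<subseteq> gnd M \<longrightarrow> K = J"
    using mat_max[OF M assms(2) mat_sub[OF M assms(2)]] by blast
  have "base M J" unfolding base_def using J mx mat_sub[OF M] by blast
  then show ?thesis using J by blast
qed

lemma dep_circuit:
  assumes M: "is_matroid M" and JE: "J \<subseteq> gnd M" and Jd: "J \<notin> ind M"
  shows "\<exists>C. circuit M C \<and> C \<subseteq> J"
proof -
  obtain I where I: "I \<in> ind M" "I \<subseteq> J" and mx: "\<forall>K\<in>ind M. I \<subseteq> K \<and> K \<subseteq> J \<longrightarrow> K = I"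
    using mat_max[OF M mat_empty[OF M] _ JE] by blast
  have "I \<noteq> J" using I Jd by auto
  then obtain x where x: "x \<in> J" "x \<notin> I" using I(2) by blast
  have dep: "insert x I \<notin> ind M" using mx x I by blast
  define C where "C = insert x {y \<in> I. insert x (I - {y}) \<in> ind M}"
  have CJ: "C \<subseteq> J" using C_def x I by blast
  have sub: "\<forall>D. D \<subset> C \<longrightarrow> D \<in> ind M"
  proof (intro allI impI)
    fix D assume "D \<subset> C"
    then obtain z where z: "z \<in> C" "z \<notin> D" "D \<subseteq> C" by blast
    show "D \<in> ind M"
    proof (cases "z = x")
      case True
      then have "D \<subseteq> I" using z C_def by blast
      then show ?thesis using mat_down[OF M I(1)] by blast
    next
      case False
      then have "insert x (I - {z}) \<in> ind M" using z C_def by blast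
      moreover have "D \<subseteq> insert x (I - {z})" using z C_def by blast
      ultimately show ?thesis using mat_down[OF M] by blast
    qed
  qed
  have Cd: "C \<notin> ind M"
  proof
    assume Ci: "C \<in> ind M"
    obtain B where B: "base M B" "I \<subseteq> B" using base_exists_ext[OF M I(1)] by blast
    have xB: "x \<notin> B" using dep mat_down[OF M base_ind[OF B(1)]] B(2) by blast
    have CB: "C \<union> B \<subseteq> gnd M" using CJ JE mat_sub[OF M base_ind[OF B(1)]] by blast
    obtain K where K: "base M K" "C \<subseteq> K" "K \<subseteq> C \<union> B"
      using base_ext[OF M Ci _ CB B(1)] by blast
    have "\<not> insert x I \<subseteq> K" using dep mat_down[OF M base_ind[OF K(1)]] by blast
    then obtain y where y: "y \<in> I" "y \<notin> K" using K(2) C_def by blast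
    have yC: "y \<notin> C" using y K by blast
    have yx: "y \<noteq> x" using y x by blast
    have nd: "insert x (I - {y}) \<notin> ind M" using yC y yx C_def by blast
    have By: "B - {y} \<in> ind M" using mat_down[OF M base_ind[OF B(1)]] by blast
    have nb: "\<not> base M (B - {y})"
    proof
      assume "base M (B - {y})"
      then have "B = B - {y}" using base_ind[OF B(1)] unfolding base_def by blast
      then show False using y B(2) by blast
    qed
    obtain z where z: "z \<in> K - (B - {y})" "insert z (B - {y}) \<in> ind M"
      using mat_aug[OF M By nb K(1)] by blast
    have "z = x" using z K(3) y C_def B(2) by auto
    then have "insert x (I - {y}) \<in> ind M" using z B(2) mat_down[OF M] by (metis Diff_mono insert_mono order_refl)
    then show False using nd by blast
  qed
  have "circuit M C" unfolding circuit_def using CJ JE Cd sub by blast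
  then show ?thesis using CJ by blast
qed

lemma circ_fin:
  assumes "circuit N C" "y \<in> C" "z \<in> C" "z \<in> fin_part N"
  shows "y \<in> fin_part N"
proof -
  obtain K where K: "component N K" "finitary (restrict N K)" "z \<in> K"
    using assms(4) unfolding fin_part_def by blast
  obtain a where a: "a \<in> gnd N" "K = {w \<in> gnd N. (a, w) \<in> (circ_rel N)\<^sup>*}"
    using K(1) unfolding component_def by blast
  have "(z, y) \<in> circ_rel N" using assms(1-3) unfolding circ_rel_def by blast
  then have "(a, y) \<in> (circ_rel N)\<^sup>*" using K(3) a(2) by auto
  moreover have "y \<in> gnd N" using assms(1,2) unfolding circuit_def by blast
  ultimately have "y \<in> K" using a(2) by blast
  then show ?thesis using K unfolding fin_part_def by blast
qed

lemma sep:
  assumes N: "is_matroid N" and JE: "J \<subseteq> gnd N"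
    and J0: "J \<inter> fin_part N \<in> ind N" and J1: "J - fin_part N \<in> ind N"
  shows "J \<in> ind N"
proof (rule ccontr)
  assume "J \<notin> ind N"
  then obtain C where C: "circuit N C" "C \<subseteq> J" using dep_circuit[OF N JE] by blast
  have Cd: "C \<notin> ind N" using C(1) unfolding circuit_def by blast
  show False
  proof (cases "C \<inter> fin_part N = {}")
    case True
    then have "C \<subseteq> J - fin_part N" using C(2) by blast
    then show False using Cd mat_down[OF N J1] by blast
  next
    case False
    then obtain z where "z \<in> C" "z \<in> fin_part N" by blast
    then have "C \<subseteq> fin_part N" using circ_fin[OF C(1)] by blast
    then have "C \<subseteq> J \<inter> fin_part N" using C(2) by blast
    then show False using Cd mat_down[OF N J0] by blast
  qed
qed

lemma dual_down: "I \<in> ind (dual M) \<Longrightarrow> J \<subseteq> I \<Longrightarrow> J \<in> ind (dual M)"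
  unfolding ind_dual by blast

lemma dual_max:
  assumes M: "is_matroid M" and Is: "Is \<in> ind (dual M)" and IX: "Is \<subseteq> X" and XE: "X \<subseteq> gnd M"
  shows "\<exists>J. J \<in> ind (dual M) \<and> Is \<subseteq> J \<and> J \<subseteq> X \<and> (\<forall>L\<in>ind (dual M). J \<subseteq> L \<and> L \<subseteq> X \<longrightarrow> L = J)"
proof -
  obtain B where B: "base M B" "Is \<subseteq> gnd M - B" using Is unfolding ind_dual by blast
  have BE: "B \<subseteq> gnd M" using mat_sub[OF M base_ind[OF B(1)]] .
  obtain BX where BX: "BX \<in> ind M" "B - X \<subseteq> BX" "BX \<subseteq> gnd M - X"
    and mxX: "\<forall>K\<in>ind M. BX \<subseteq> K \<and> K \<subseteq> gnd M - X \<longrightarrow> K = BX"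
  proof -
    have BXi: "B - X \<in> ind M" by (rule mat_down[OF M base_ind[OF B(1)]]) blast
    have h1: "B - X \<subseteq> gnd M - X" using BE by blast
    have h2: "gnd M - X \<subseteq> gnd M" by blast
    show ?thesis using mat_max[OF M BXi h1 h2] that by blast
  qed
  have h3: "BX \<subseteq> BX \<union> B" by blast
  have h4: "BX \<union> B \<subseteq> gnd M" using BE BX(3) by blast
  have h5: "B \<subseteq> BX \<union> B" by blast
  obtain B2 where B2: "base M B2" "BX \<subseteq> B2" "B2 \<subseteq> BX \<union> B"
    using base_ext[OF M BX(1) h3 h4 B(1) h5] by blast
  define J where "J = X - B2"
  have Jd: "J \<in> ind (dual M)" unfolding ind_dual J_def using B2(1) XE by blast
  have IJ: "Is \<subseteq> J" unfolding J_def using IX B(2) B2(3) BX(3) by blast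
  have mx: "\<forall>L\<in>ind (dual M). J \<subseteq> L \<and> L \<subseteq> X \<longrightarrow> L = J"
  proof (intro ballI impI)
    fix L assume L: "L \<in> ind (dual M)" "J \<subseteq> L \<and> L \<subseteq> X"
    obtain B3 where B3: "base M B3" "L \<subseteq> gnd M - B3" using L(1) unfolding ind_dual by blast
    have B3E: "B3 \<subseteq> gnd M" using mat_sub[OF M base_ind[OF B3(1)]] .
    have "L \<inter> B2 = {}"
    proof (rule ccontr)
      assume "L \<inter> B2 \<noteq> {}"
      then obtain x where x: "x \<in> L" "x \<in> B2" by blast
      have xX: "x \<in> X" using x L(2) by blast
      have xB3: "x \<notin> B3" using x B3(2) by blast
      have Bx: "B2 - {x} \<in> ind M" using mat_down[OF M base_ind[OF B2(1)]] by blast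
      have nb: "\<not> base M (B2 - {x})"
      proof
        assume "base M (B2 - {x})"
        then have "B2 = B2 - {x}" using base_ind[OF B2(1)] unfolding base_def by blast
        then show False using x by blast
      qed
      obtain z where z: "z \<in> B3 - (B2 - {x})" "insert z (B2 - {x}) \<in> ind M"
        using mat_aug[OF M Bx nb B3(1)] by blast
      have zB2: "z \<notin> B2" using z xB3 by blast
      have zX: "z \<notin> X" using z zB2 B3(2) L(2) unfolding J_def by blast
      have "BX \<subseteq> B2 - {x}" using B2(2) BX(3) xX by blast
      then have "insert z BX \<in> ind M" using z(2) mat_down[OF M] by (meson insert_mono)
      moreover have "insert z BX \<subseteq> gnd M - X" using zX z B3E BX(3) by blast
      ultimately have "insert z BX = BX" using mxX by blast
      then show False using zB2 B2(2) by blast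
    qed
    then show "L = J" using L(2) unfolding J_def by blast
  qed
  show ?thesis using Jd IJ mx J_def by blast
qed

lemma dual_sep:
  assumes N: "is_matroid N" and JE: "J \<subseteq> gnd N"
    and J0: "J \<inter> fin_part N \<in> ind (dual N)" and J1: "J - fin_part N \<in> ind (dual N)"
  shows "J \<in> ind (dual N)"
proof -
  let ?F = "fin_part N"
  obtain B0 where B0: "base N B0" "J \<inter> ?F \<subseteq> gnd N - B0" using J0 unfolding ind_dual by blast
  obtain B1 where B1: "base N B1" "J - ?F \<subseteq> gnd N - B1" using J1 unfolding ind_dual by blast
  have B0i: "B0 \<in> ind N" and B1i: "B1 \<in> ind N" using B0 B1 base_ind by auto
  have B0E: "B0 \<subseteq> gnd N" and B1E: "B1 \<subseteq> gnd N" using mat_sub[OF N] B0i B1i by auto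
  define B where "B = (B0 \<inter> ?F) \<union> (B1 - ?F)"
  have Bi: "B \<in> ind N"
  proof (rule sep[OF N])
    show "B \<subseteq> gnd N" using B_def B0E B1E by blast
    have "B \<inter> ?F = B0 \<inter> ?F" using B_def by blast
    then show "B \<inter> ?F \<in> ind N" using mat_down[OF N B0i] by auto
    have "B - ?F = B1 - ?F" using B_def by blast
    then show "B - ?F \<in> ind N" using mat_down[OF N B1i] by auto
  qed
  have "base N B" unfolding base_def
  proof (intro conjI Bi ballI impI)
    fix L assume L: "L \<in> ind N" "B \<subseteq> L"
    have LE: "L \<subseteq> gnd N" using mat_sub[OF N L(1)] .
    have L0: "(L \<inter> ?F) \<union> (B0 - ?F) \<in> ind N"
    proof (rule sep[OF N])
      show "(L \<inter> ?F) \<union> (B0 - ?F) \<subseteq> gnd N" using LE B0E by blast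
      have "((L \<inter> ?F) \<union> (B0 - ?F)) \<inter> ?F = L \<inter> ?F" by blast
      then show "((L \<inter> ?F) \<union> (B0 - ?F)) \<inter> ?F \<in> ind N" using mat_down[OF N L(1)] by auto
      have "((L \<inter> ?F) \<union> (B0 - ?F)) - ?F = B0 - ?F" by blast
      then show "((L \<inter> ?F) \<union> (B0 - ?F)) - ?F \<in> ind N" using mat_down[OF N B0i] by auto
    qed
    have "B0 \<subseteq> (L \<inter> ?F) \<union> (B0 - ?F)" using L(2) B_def by blast
    then have e0: "(L \<inter> ?F) \<union> (B0 - ?F) = B0" using B0(1) L0 unfolding base_def by blast
    have L1: "(L - ?F) \<union> (B1 \<inter> ?F) \<in> ind N"
    proof (rule sep[OF N])
      show "(L - ?F) \<union> (B1 \<inter> ?F) \<subseteq> gnd N" using LE B1E by blast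
      have "((L - ?F) \<union> (B1 \<inter> ?F)) \<inter> ?F = B1 \<inter> ?F" by blast
      then show "((L - ?F) \<union> (B1 \<inter> ?F)) \<inter> ?F \<in> ind N" using mat_down[OF N B1i] by auto
      have "((L - ?F) \<union> (B1 \<inter> ?F)) - ?F = L - ?F" by blast
      then show "((L - ?F) \<union> (B1 \<inter> ?F)) - ?F \<in> ind N" using mat_down[OF N L(1)] by auto
    qed
    have "B1 \<subseteq> (L - ?F) \<union> (B1 \<inter> ?F)" using L(2) B_def by blast
    then have e1: "(L - ?F) \<union> (B1 \<inter> ?F) = B1" using B1(1) L1 unfolding base_def by blast
    show "L = B" using e0 e1 L(2) unfolding B_def by blast
  qed
  moreover have "J \<subseteq> gnd N - B" using B0(2) B1(2) JE B_def by blast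
  ultimately show ?thesis unfolding ind_dual using JE by blast
qed

lemma contract_ind: "ind (contract M X) = {J. J \<subseteq> gnd M - X \<and> (\<exists>D. base (restrict (dual M) (gnd M - X)) D \<and> J \<subseteq> (gnd M - X) - D)}"
  unfolding contract_def ind_dual gnd_restrict ..

lemma contract_to_ind: "X \<subseteq> gnd K \<Longrightarrow> ind (contract_to K X) = {J. J \<subseteq> X \<and> (\<exists>B. base (restrict (dual K) X) B \<and> J \<subseteq> X - B)}"
proof -
  assume "X \<subseteq> gnd K"
  then have "gnd K - (gnd K - X) = X" by blast
  then have "contract_to K X = dual (restrict (dual K) X)" unfolding contract_to_def contract_def gnd_dual by metis
  then have "ind (contract_to K X) = ind (dual (restrict (dual K) X))" by (rule arg_cong)
  also have "\<dots> = {J. J \<subseteq> gnd (restrict (dual K) X) \<and> (\<exists>B. base (restrict (dual K) X) B \<and> J \<subseteq> gnd (restrict (dual K) X) - B)}"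
    by (rule ind_dual)
  finally show ?thesis by (simp only: gnd_restrict)
qed

lemma loop_contract:
  assumes M: "is_matroid M" and I: "I \<in> ind M" and J: "J \<in> ind (contract M I)" and JX: "J \<subseteq> span_ring M I"
  shows "J = {}"
proof (rule ccontr)
  assume "J \<noteq> {}"
  then obtain e where e: "e \<in> J" by blast
  have eI: "e \<notin> I" and eE: "e \<in> gnd M" and "\<exists>C. circuit M C \<and> e \<in> C \<and> C \<subseteq> insert e I"
    using e JX unfolding span_ring_def span_def by auto
  then obtain C where C: "circuit M C" "C \<subseteq> insert e I" by blast
  have dep: "insert e I \<notin> ind M" using C mat_down[OF M] unfolding circuit_def by blast
  obtain D where D: "base (restrict (dual M) (gnd M - I)) D" "J \<subseteq> (gnd M - I) - D"
    using J unfolding contract_ind by blast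
  have Di: "D \<in> ind (dual M)" "D \<subseteq> gnd M - I"
    and Dmx: "\<forall>L\<in>ind (dual M). L \<subseteq> gnd M - I \<and> D \<subseteq> L \<longrightarrow> L = D"
    using D(1) unfolding base_restrict by auto
  obtain B0 where B0: "base M B0" "D \<subseteq> gnd M - B0" using Di(1) unfolding ind_dual by blast
  have B0E: "B0 \<subseteq> gnd M" using mat_sub[OF M base_ind[OF B0(1)]] .
  obtain B1 where B1: "base M B1" "I \<subseteq> B1" "B1 \<subseteq> gnd M - D"
    using base_ext[OF M I, of "gnd M - D" B0] B0 B0E Di(2) mat_sub[OF M I] by blast
  have "e \<notin> B1" using dep B1(2) mat_down[OF M base_ind[OF B1(1)]] by blast
  then have "insert e D \<in> ind (dual M)" unfolding ind_dual using B1 eE Di(2) by blast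
  moreover have "insert e D \<subseteq> gnd M - I" using eE eI Di(2) by blast
  ultimately have "insert e D = D" using Dmx by blast
  then show False using e D(2) by blast
qed

lemma empty_contract:
  assumes M: "is_matroid M" and I: "I \<in> ind M"
  shows "{} \<in> ind (contract M I)"
proof -
  obtain B1 where B1: "base M B1" "I \<subseteq> B1" using base_exists_ext[OF M I] by blast
  have "base (restrict (dual M) (gnd M - I)) (gnd M - B1)"
    unfolding base_restrict
  proof (intro conjI ballI impI)
    show "gnd M - B1 \<in> ind (dual M)" unfolding ind_dual using B1 by blast
    show "gnd M - B1 \<subseteq> gnd M - I" using B1 by blast
    fix L assume L: "L \<in> ind (dual M)" "L \<subseteq> gnd M - I \<and> gnd M - B1 \<subseteq> L"
    obtain B' where B': "base M B'" "L \<subseteq> gnd M - B'" using L(1) unfolding ind_dual by blast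
    have "B' \<subseteq> gnd M" using mat_sub[OF M base_ind[OF B'(1)]] .
    then have "B' \<subseteq> B1" using B' L(2) by blast
    then have "B1 = B'" using B'(1) base_ind[OF B1(1)] unfolding base_def by blast
    then show "L = gnd M - B1" using B' L by blast
  qed
  then show ?thesis unfolding contract_ind by blast
qed

lemma key_base:
  assumes N: "is_matroid N" and XE: "X \<subseteq> gnd N - I"
  shows "\<exists>J0. J0 \<in> ind (dual N) \<and> J0 \<subseteq> X \<and> base (restrict (dual (contract N I)) X) J0
     \<and> (\<forall>L\<in>ind (dual N). J0 \<subseteq> L \<and> L \<subseteq> X \<longrightarrow> L = J0)"
proof -
  obtain B where B: "base N B" using base_exists_ext[OF N mat_empty[OF N]] by blast
  have e: "{} \<in> ind (dual N)" unfolding ind_dual using B by blast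
  obtain J0 where J0: "J0 \<in> ind (dual N)" "J0 \<subseteq> X"
    and mx: "\<forall>L\<in>ind (dual N). J0 \<subseteq> L \<and> L \<subseteq> X \<longrightarrow> L = J0"
    using dual_max[OF N e, of X] XE by blast
  obtain D where D: "D \<in> ind (dual N)" "J0 \<subseteq> D" "D \<subseteq> gnd N - I"
    and mxD: "\<forall>L\<in>ind (dual N). D \<subseteq> L \<and> L \<subseteq> gnd N - I \<longrightarrow> L = D"
    using dual_max[OF N J0(1), of "gnd N - I"] J0(2) XE by blast
  have bD: "base (restrict (dual N) (gnd N - I)) D" unfolding base_restrict using D mxD by blast
  have bB': "base (contract N I) (gnd N - I - D)" unfolding base_def
  proof (intro conjI ballI impI)
    show "gnd N - I - D \<in> ind (contract N I)" unfolding contract_ind using bD by blast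
    fix L assume L: "L \<in> ind (contract N I)" "gnd N - I - D \<subseteq> L"
    obtain D' where D': "base (restrict (dual N) (gnd N - I)) D'" "L \<subseteq> gnd N - I - D'"
      using L(1) unfolding contract_ind by blast
    have "D' \<subseteq> D" using D' L(2) unfolding base_restrict by blast
    then have "D = D'" using D' D unfolding base_restrict by blast
    then show "L = gnd N - I - D" using L D' by blast
  qed
  have "base (restrict (dual (contract N I)) X) J0" unfolding base_restrict
  proof (intro conjI ballI impI)
    have "J0 \<subseteq> gnd (contract N I) - (gnd N - I - D)" using J0(2) XE D(2) by auto
    moreover have "J0 \<subseteq> gnd (contract N I)" using J0(2) XE by auto
    ultimately show "J0 \<in> ind (dual (contract N I))" unfolding ind_dual using bB' by blast
    show "J0 \<subseteq> X" using J0(2) .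
    fix L assume L: "L \<in> ind (dual (contract N I))" "L \<subseteq> X \<and> J0 \<subseteq> L"
    obtain B'' where B'': "base (contract N I) B''" "L \<subseteq> gnd N - I - B''"
      using L(1) unfolding ind_dual gnd_contract by blast
    obtain D'' where D'': "base (restrict (dual N) (gnd N - I)) D''" "B'' \<subseteq> gnd N - I - D''"
      using base_ind[OF B''(1)] unfolding contract_ind by blast
    have "gnd N - I - D'' \<in> ind (contract N I)" unfolding contract_ind using D'' by blast
    then have "gnd N - I - D'' = B''" using B''(1) D''(2) unfolding base_def by blast
    then have "L \<subseteq> D''" using B''(2) D''(1) unfolding base_restrict by blast
    moreover have "D'' \<in> ind (dual N)" using D''(1) unfolding base_restrict by blast
    ultimately have "L \<in> ind (dual N)" using dual_down by blast
    then show "L = J0" using mx L(2) by blast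
  qed
  then show ?thesis using J0 mx by (intro exI[of _ J0]) simp
qed

theorem mainTheorem13:
  fixes E :: "'a set" and M N :: "'a matroid" and I :: "'a set"
  assumes "countable E"
    and "is_matroid M" and "gnd M = E" and "finitary M"
    and "is_matroid N" and "gnd N = E" and "fin_cofin_sum N"
    and "dually_safe M N I" and "feasible M N I"
  shows "base (restrict (dual N) (span M I \<inter> cofin_part N)) (span_ring M I \<inter> cofin_part N)"
proof -
  note M = assms(2) and N = assms(5)
  have IM: "I \<in> ind M" and IN: "I \<in> ind N" and cnd: "cond (contract M I) (contract N I)"
    using assms(9) unfolding feasible_def by auto
  have IE: "I \<subseteq> E" using mat_sub[OF M IM] assms(3) by simp
  define X where "X = span_ring M I"
  have XspE: "X \<subseteq> gnd M - I" unfolding X_def span_ring_def span_def by blast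
  have XE: "X \<subseteq> gnd N - I" using XspE assms(3,6) by simp
  obtain J0 where J0: "J0 \<in> ind (dual N)" "J0 \<subseteq> X" "base (restrict (dual (contract N I)) X) J0"
    using key_base[OF N XE] by blast
  have XcN: "X \<subseteq> gnd (contract N I)" using XE by simp
  have ctind: "ind (contract_to (contract N I) X) = {J. J \<subseteq> X \<and> (\<exists>B. base (restrict (dual (contract N I)) X) B \<and> J \<subseteq> X - B)}"
    using contract_to_ind[OF XcN] .
  have e1: "{} \<in> ind (contract_to (contract N I) X)" unfolding ctind
    by (intro CollectI conjI exI[of _ J0] J0(3)) auto
  have loops: "\<And>J. J \<in> ind (contract M I) \<Longrightarrow> J \<subseteq> X \<Longrightarrow> J = {}"
    using loop_contract[OF M IM] X_def by blast
  have b0: "base (restrict (contract M I) X) {}" unfolding base_restrict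
    using empty_contract[OF M IM] loops by blast
  have wv: "wave (contract M I) (contract N I) X" unfolding wave_def
    using XspE b0 e1 by auto
  obtain Bc where Bc: "base (contract_to (contract N I) X) Bc" "Bc \<in> ind (contract M I)"
    using cnd[unfolded cond_def, rule_format, OF wv] by blast
  have "Bc \<subseteq> X" using base_ind[OF Bc(1)] unfolding ctind by blast
  then have Bc0: "Bc = {}" using loops Bc(2) by blast
  have XJ: "X - J0 \<in> ind (contract_to (contract N I) X)" unfolding ctind
    by (intro CollectI conjI exI[of _ J0] J0(3)) auto
  have bmx: "\<forall>L\<in>ind (contract_to (contract N I) X). Bc \<subseteq> L \<longrightarrow> L = Bc"
    using Bc(1) unfolding base_def by (rule conjunct2)
  have "Bc \<subseteq> X - J0" using Bc0 by simp
  then have "X - J0 = Bc" using bspec[OF bmx XJ] by (rule mp[rotated])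
  then have "X - J0 = {}" using Bc0 by simp
  then have "X \<subseteq> J0" by blast
  then have Xi: "X \<in> ind (dual N)" using dual_down[OF J0(1)] by blast
  show ?thesis unfolding base_restrict
  proof (intro conjI ballI impI)
    show "span_ring M I \<inter> cofin_part N \<in> ind (dual N)" using dual_down[OF Xi] X_def by blast
    show "span_ring M I \<inter> cofin_part N \<subseteq> span M I \<inter> cofin_part N" unfolding span_ring_def by blast
    fix K assume K: "K \<in> ind (dual N)" "K \<subseteq> span M I \<inter> cofin_part N \<and> span_ring M I \<inter> cofin_part N \<subseteq> K"
    show "K = span_ring M I \<inter> cofin_part N"
    proof (rule ccontr)
      assume "K \<noteq> span_ring M I \<inter> cofin_part N"
      then obtain x where x: "x \<in> K" "x \<notin> span_ring M I \<inter> cofin_part N" using K(2) by blast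
      have xc: "x \<in> cofin_part N" and xs: "x \<in> span M I" using x K(2) by auto
      have xI: "x \<in> I" using xs x(2) xc unfolding span_ring_def by blast
      have xX: "x \<notin> X" using xI unfolding X_def span_ring_def by blast
      have "x \<in> span (dual N) X" using assms(8) xI xc unfolding dually_safe_def X_def by blast
      then obtain C where C: "circuit (dual N) C" "x \<in> C" "C \<subseteq> insert x X"
        using xX unfolding span_def by blast
      have CE: "C \<subseteq> gnd N" using C(1) unfolding circuit_def by simp
      have Cd: "C \<notin> ind (dual N)" using C(1) unfolding circuit_def by blast
      have xF: "x \<notin> fin_part N" using xc unfolding cofin_part_def by blast
      have "C \<inter> fin_part N \<subseteq> X" using C(3) xF by blast
      then have c0: "C \<inter> fin_part N \<in> ind (dual N)" using dual_down[OF Xi] by blast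
      have "C - fin_part N \<subseteq> K" using C(3) CE K(2) x(1) unfolding cofin_part_def X_def by blast
      then have c1: "C - fin_part N \<in> ind (dual N)" using dual_down[OF K(1)] by blast
      show False using dual_sep[OF N CE c0 c1] Cd by blast
    qed
  qed
qed

end
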